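(* $A_4(11,8)\le 60$.
   Context: For an integer $q\ge2$ let $[q]=\{0,1,\dots,q-1\}$. The Hamming distance between $u,v\in[q]^n$ is the number of coordinates in which they differ; $A_q(n,d)$ is the maximum cardinality of a code $C\subseteq[q]^n$ in which any two distinct codewords have Hamming distance at least $d$. *)

theory Defs
  imports Main
begin

definition words :: "nat \<Rightarrow> nat \<Rightarrow> nat list set" where
  "words q n = {w. length w = n \<and> (\<forall>i<n. w ! i < q)}"

definition hamming_dist :: "nat list \<Rightarrow> nat list \<Rightarrow> nat" where
  "hamming_dist u v = card {i. i < length u \<and> u ! i \<noteq> v ! i}"

definition is_code :: "nat \<Rightarrow> nat \<Rightarrow> nat \<Rightarrow> nat list set \<Rightarrow> bool" where
  "is_code q n d C \<longleftrightarrow> C \<subseteq> words q n \<and>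
     (\<forall>u\<in>C. \<forall>v\<in>C. u \<noteq> v \<longrightarrow> hamming_dist u v \<ge> d)"

text \<open>A_q(n,d): maximum cardinality of such a code (the set of codes is finite).\<close>
definition A_code :: "nat \<Rightarrow> nat \<Rightarrow> nat \<Rightarrow> nat" where
  "A_code q n d = Max {card C | C. is_code q n d C}"

end

theory Submission
  imports Defs
begin


lemma sum_boole_int:
  assumes "finite A"
  shows "(\<Sum>x\<in>A. if P x then 1 else 0 :: int) = int (card {x\<in>A. P x})"
proof -
  have "(\<Sum>x\<in>A. if P x then 1 else 0 :: int) = (\<Sum>x\<in>{x\<in>A. P x}. 1)"
    using sum.inter_filter[OF assms, of "\<lambda>_. 1::int" P] by simp
  then show ?thesis by simp
qed

lemma pairs_count:
  assumes fin: "finite K" and fB: "finite B" and im: "f ` K \<subseteq> B"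
  shows "(\<Sum>u\<in>K. \<Sum>v\<in>K. if f u = f v then 1 else 0 :: int)
           = (\<Sum>b\<in>B. (int (card {u\<in>K. f u = b}))^2)"
    and "(\<Sum>b\<in>B. int (card {u\<in>K. f u = b})) = int (card K)"
proof -
  have A: "(\<Sum>v\<in>K. if f u = f v then 1 else 0 :: int) = int (card {v\<in>K. f v = f u})" for u
    using sum_boole_int[OF fin, of "\<lambda>v. f u = f v"] by (simp add: eq_commute)
  have "(\<Sum>u\<in>K. \<Sum>v\<in>K. if f u = f v then 1 else 0 :: int)
       = (\<Sum>u\<in>K. int (card {v\<in>K. f v = f u}))" using A by simp
  also have "\<dots> = (\<Sum>b\<in>B. \<Sum>u\<in>{x\<in>K. f x = b}. int (card {v\<in>K. f v = f u}))"
    using sum.group[OF fin fB im, of "\<lambda>u. int (card {v\<in>K. f v = f u})"] by simp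
  also have "\<dots> = (\<Sum>b\<in>B. (int (card {u\<in>K. f u = b}))^2)"
  proof (rule sum.cong[OF refl])
    fix b assume "b \<in> B"
    have "(\<Sum>u\<in>{x\<in>K. f x = b}. int (card {v\<in>K. f v = f u}))
        = (\<Sum>u\<in>{x\<in>K. f x = b}. int (card {v\<in>K. f v = b}))"
      by (rule sum.cong) auto
    then show "(\<Sum>u\<in>{x\<in>K. f x = b}. int (card {v\<in>K. f v = f u})) = (int (card {u\<in>K. f u = b}))^2"
      by (simp add: power2_eq_square)
  qed
  finally show "(\<Sum>u\<in>K. \<Sum>v\<in>K. if f u = f v then 1 else 0 :: int)
           = (\<Sum>b\<in>B. (int (card {u\<in>K. f u = b}))^2)" .
  have "(\<Sum>b\<in>B. \<Sum>u\<in>{x\<in>K. f x = b}. (1::int)) = (\<Sum>u\<in>K. 1)"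
    using sum.group[OF fin fB im, of "\<lambda>u. 1::int"] .
  then show "(\<Sum>b\<in>B. int (card {u\<in>K. f u = b})) = int (card K)" by simp
qed

lemma sq_ge1: "(m::int)^2 \<ge> 7*m - 12"
proof -
  have "(m-3)*(m-4) \<ge> 0"
  proof (cases "m \<le> 3")
    case True then show ?thesis by (intro mult_nonpos_nonpos) auto
  next
    case False then show ?thesis by (intro mult_nonneg_nonneg) auto
  qed
  then show ?thesis by (simp add: power2_eq_square algebra_simps)
qed

lemma sq_ge2: "16*(m::int)^2 \<ge> 8*n*m - n^2"
proof -
  have "(4*m - n)^2 \<ge> 0" by simp
  then show ?thesis by (simp add: power2_eq_square algebra_simps)
qed

lemma Q_lower1:
  assumes "finite K" "finite B" "f ` K \<subseteq> B"
  shows "(\<Sum>u\<in>K. \<Sum>v\<in>K. if f u = f v then 1 else 0 :: int) \<ge> 7 * int (card K) - 12 * int (card B)"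
proof -
  have "(\<Sum>b\<in>B. 7 * int (card {u\<in>K. f u = b}) - 12) \<le> (\<Sum>b\<in>B. (int (card {u\<in>K. f u = b}))^2)"
    by (rule sum_mono) (rule sq_ge1)
  moreover have "(\<Sum>b\<in>B. 7 * int (card {u\<in>K. f u = b}) - 12) = 7 * int (card K) - 12 * int (card B)"
    using pairs_count(2)[OF assms] by (simp add: sum_subtractf sum_distrib_left[symmetric])
  ultimately show ?thesis using pairs_count(1)[OF assms] by simp
qed

lemma Q_lower2:
  assumes "finite K" "finite B" "f ` K \<subseteq> B"
  shows "16 * (\<Sum>u\<in>K. \<Sum>v\<in>K. if f u = f v then 1 else 0 :: int) \<ge> 8 * (int (card K))^2 - (int (card K))^2 * int (card B)"
proof -
  let ?n = "int (card K)"
  have "(\<Sum>b\<in>B. 8 * ?n * int (card {u\<in>K. f u = b}) - ?n^2) \<le> (\<Sum>b\<in>B. 16 * (int (card {u\<in>K. f u = b}))^2)"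
    by (rule sum_mono) (rule sq_ge2)
  moreover have "(\<Sum>b\<in>B. 8 * ?n * int (card {u\<in>K. f u = b}) - ?n^2) = 8 * ?n^2 - ?n^2 * int (card B)"
    using pairs_count(2)[OF assms] by (simp add: sum_subtractf sum_distrib_left[symmetric] power2_eq_square)
  ultimately show ?thesis using pairs_count(1)[OF assms] by (simp add: sum_distrib_left)
qed

lemma Q_exact:
  assumes "finite K" "finite B" "f ` K \<subseteq> B"
  shows "(\<Sum>u\<in>K. \<Sum>v\<in>K. if f u = f v then 1 else 0 :: int)
     = (\<Sum>b\<in>B. (int (card {u\<in>K. f u = b}) - 4)^2) + 8 * int (card K) - 16 * int (card B)"
proof -
  have "(\<Sum>b\<in>B. (int (card {u\<in>K. f u = b}) - 4)^2)
     = (\<Sum>b\<in>B. (int (card {u\<in>K. f u = b}))^2 - 8 * int (card {u\<in>K. f u = b}) + 16)"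
    by (rule sum.cong) (auto simp: power2_eq_square algebra_simps)
  also have "\<dots> = (\<Sum>b\<in>B. (int (card {u\<in>K. f u = b}))^2) - 8 * int (card K) + 16 * int (card B)"
    using pairs_count(2)[OF assms] by (simp add: sum.distrib sum_subtractf sum_distrib_left[symmetric])
  finally show ?thesis using pairs_count(1)[OF assms] by simp
qed

lemma sum4: "(\<Sum>a<(4::nat). f a) = f 0 + f 1 + f 2 + (f 3 :: 'a::comm_monoid_add)"
  by (simp add: eval_nat_numeral add.assoc)

definition eqi :: "nat \<Rightarrow> nat list \<Rightarrow> nat list \<Rightarrow> int" where
  "eqi i u v = (if u!i = v!i then 1 else 0)"

definition ag :: "nat list \<Rightarrow> nat list \<Rightarrow> int" where
  "ag u v = (\<Sum>i<11. eqi i u v)"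

lemma ag_sym: "ag u v = ag v u"
  unfolding ag_def eqi_def by (simp add: eq_commute)

lemma ag_self: "ag u u = 11"
  unfolding ag_def eqi_def by simp

lemma ag_nonneg: "ag u v \<ge> 0"
  unfolding ag_def eqi_def by (intro sum_nonneg) auto

lemma ag_ham:
  assumes "length u = 11"
  shows "ag u v + int (hamming_dist u v) = 11"
proof -
  have h: "int (hamming_dist u v) = (\<Sum>i<11. if u!i \<noteq> v!i then 1 else 0)"
    unfolding hamming_dist_def using assms sum_boole_int[of "{..<11}" "\<lambda>i. u!i \<noteq> v!i"]
    by (simp add: lessThan_def)
  have "ag u v + int (hamming_dist u v) = (\<Sum>i<11. eqi i u v + (if u!i \<noteq> v!i then 1 else 0))"
    unfolding ag_def h by (simp add: sum.distrib)
  also have "\<dots> = (\<Sum>i<(11::nat). 1)" by (rule sum.cong) (auto simp: eqi_def)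
  finally show ?thesis by simp
qed

locale code61 =
  fixes C :: "nat list set"
  assumes sub: "C \<subseteq> words 4 11"
    and dist: "\<forall>u\<in>C. \<forall>v\<in>C. u \<noteq> v \<longrightarrow> 8 \<le> hamming_dist u v"
    and cardC: "card C = 61"
begin

lemma finC: "finite C" using cardC by (metis card.infinite zero_neq_numeral)

lemma len: "u \<in> C \<Longrightarrow> length u = 11" using sub by (auto simp: words_def)
lemma ent: "u \<in> C \<Longrightarrow> j < 11 \<Longrightarrow> u!j < 4" using sub by (auto simp: words_def)

lemma ag_le3: "u \<in> C \<Longrightarrow> v \<in> C \<Longrightarrow> u \<noteq> v \<Longrightarrow> ag u v \<le> 3"
  using dist ag_ham[OF len, of u v] by force

lemma colQ:
  assumes "K \<subseteq> C" "j < 11"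
  shows "(\<Sum>u\<in>K. \<Sum>v\<in>K. eqi j u v) = (\<Sum>u\<in>K. \<Sum>v\<in>K. if (\<lambda>w. w!j) u = (\<lambda>w. w!j) v then 1 else 0)"
    and "finite K" "finite {..<(4::nat)}" "(\<lambda>w. w!j) ` K \<subseteq> {..<4}"
  using assms ent finite_subset[OF assms(1) finC] by (auto simp: eqi_def)

lemma swap3: "(\<Sum>u\<in>K. \<Sum>v\<in>K. \<Sum>j<(11::nat). e j u v) = (\<Sum>j<11. \<Sum>u\<in>K. \<Sum>v\<in>K. (e j u v::int))"
proof -
  have "(\<Sum>u\<in>K. \<Sum>v\<in>K. \<Sum>j<(11::nat). e j u v) = (\<Sum>u\<in>K. \<Sum>j<11. \<Sum>v\<in>K. e j u v)"
    by (rule sum.cong[OF refl], rule sum.swap)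
  also have "\<dots> = (\<Sum>j<11. \<Sum>u\<in>K. \<Sum>v\<in>K. e j u v)" by (rule sum.swap)
  finally show ?thesis .
qed

lemma class_lemma:
  fixes a :: nat
  assumes i: "i < 11"
  defines "K \<equiv> {u\<in>C. u!i = a}"
  shows "card K \<le> 16"
    and "card K = 16 \<Longrightarrow> j < 11 \<Longrightarrow> j \<noteq> i \<Longrightarrow> b < 4 \<Longrightarrow> card {u\<in>K. u!j = b} = 4"
proof -
  have KC: "K \<subseteq> C" unfolding K_def by auto
  have finK: "finite K" using finite_subset[OF KC finC] .
  define n where "n = int (card K)"
  define Q where "Q j = (\<Sum>u\<in>K. \<Sum>v\<in>K. eqi j u v)" for j
  define T where "T = (\<Sum>u\<in>K. \<Sum>v\<in>K. ag u v)"
  have T_eq: "T = (\<Sum>j<11. Q j)" unfolding T_def Q_def ag_def by (rule swap3)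
  have rowb: "(\<Sum>v\<in>K. ag u v) \<le> 3 * n + 8" if u: "u \<in> K" for u
  proof -
    have "(\<Sum>v\<in>K. ag u v) = ag u u + (\<Sum>v\<in>K - {u}. ag u v)" using sum.remove[OF finK u] .
    also have "(\<Sum>v\<in>K - {u}. ag u v) \<le> of_nat (card (K - {u})) * 3"
      by (rule sum_bounded_above) (use u KC ag_le3 in auto)
    finally have "(\<Sum>v\<in>K. ag u v) \<le> 11 + int (card K - 1) * 3" using u finK by (simp add: ag_self card_Diff_singleton)
    moreover have "card K \<noteq> 0" using u finK by auto
    then have "card K \<ge> 1" by linarith
    ultimately show ?thesis by (simp add: n_def of_nat_diff)
  qed
  have T_up: "T \<le> n * (3 * n + 8)"
    unfolding T_def using sum_bounded_above[of K "\<lambda>u. \<Sum>v\<in>K. ag u v" "3*n+8"] rowb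
    by (simp add: n_def)
  have Qi: "Q i = n^2"
  proof -
    have "Q i = (\<Sum>u\<in>K. \<Sum>v\<in>K. 1)" unfolding Q_def by (rule sum.cong[OF refl], rule sum.cong) (auto simp: K_def eqi_def)
    then show ?thesis by (simp add: n_def power2_eq_square)
  qed
  define R where "R = {..<(11::nat)} - {i}"
  have cardR: "card R = 10" unfolding R_def using i by simp
  have finR: "finite R" unfolding R_def by simp
  have T_split: "T = n^2 + (\<Sum>j\<in>R. Q j)"
    unfolding T_eq R_def using sum.remove[of "{..<11}" i Q] i Qi by simp
  have Qlow: "16 * Q j \<ge> 4 * n^2" if "j \<in> R" for j
  proof -
    have j: "j < 11" using that R_def by auto
    have "16 * Q j \<ge> 8 * n^2 - n^2 * int (card {..<(4::nat)})"
      unfolding Q_def colQ(1)[OF KC j] n_def by (rule Q_lower2[OF colQ(2-4)[OF KC j]])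
    then show ?thesis by simp
  qed
  have "(\<Sum>j\<in>R. 16 * Q j) \<ge> (\<Sum>j\<in>R. 4 * n^2)" by (rule sum_mono) (rule Qlow)
  then have sumR: "16 * (\<Sum>j\<in>R. Q j) \<ge> 40 * n^2" using cardR by (simp add: sum_distrib_left)
  have key: "8 * n^2 \<le> 128 * n" using T_up T_split sumR by (simp add: algebra_simps power2_eq_square)
  have n0: "n \<ge> 0" by (simp add: n_def)
  have "n \<le> 16"
  proof (rule ccontr)
    assume "\<not> n \<le> 16"
    then have "16 * n < n * n" by (intro mult_strict_right_mono) auto
    then show False using key by (simp add: power2_eq_square algebra_simps)
  qed
  then show "card K \<le> 16" by (simp add: n_def)
  assume c16: "card K = 16" and j: "j < 11" "j \<noteq> i" and b: "b < 4"
  have n16: "n = 16" using c16 n_def by simp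
  define Z where "Z j = (\<Sum>b<(4::nat). (int (card {u\<in>K. u!j = b}) - 4)^2)" for j
  have Qz: "Q j = Z j + 64" if "j \<in> R" for j
  proof -
    have j: "j < 11" using that R_def by auto
    show ?thesis unfolding Q_def colQ(1)[OF KC j] Z_def
      using Q_exact[OF colQ(2-4)[OF KC j]] c16 by simp
  qed
  have "(\<Sum>j\<in>R. Q j) = (\<Sum>j\<in>R. Z j) + 640" using Qz cardR by (simp add: sum.distrib)
  then have Zs: "(\<Sum>j\<in>R. Z j) \<le> 0" using T_up T_split n16 by simp
  have Zn: "Z j \<ge> 0" for j unfolding Z_def by (intro sum_nonneg) auto
  have "(\<Sum>j\<in>R. Z j) = 0" using Zs sum_nonneg[of R Z] Zn by force
  then have "\<forall>j\<in>R. Z j = 0" using sum_nonneg_eq_0_iff[OF finR] Zn by blast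
  then have "Z j = 0" using j R_def by auto
  then have "(int (card {u\<in>K. u!j = b}) - 4)^2 = 0"
    unfolding Z_def using sum_nonneg_eq_0_iff[of "{..<(4::nat)}" "\<lambda>b. (int (card {u\<in>K. u!j = b}) - 4)^2"] b by auto
  then show "card {u\<in>K. u!j = b} = 4" by simp
qed

lemma col_facts:
  assumes i: "i < 11"
  shows "(\<Sum>a<(4::nat). int (card {u\<in>C. u!i = a})) = 61"
    and "(\<Sum>u\<in>C. \<Sum>v\<in>C. eqi i u v) = (\<Sum>a<(4::nat). (int (card {u\<in>C. u!i = a}))^2)"
  using pairs_count[OF colQ(2-4)[OF subset_refl i]] colQ(1)[OF subset_refl i] cardC by auto

lemma sq_le_chord: "13 \<le> (n::int) \<Longrightarrow> n \<le> 16 \<Longrightarrow> n^2 \<le> 29*n - 208"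
proof -
  assume "13 \<le> n" "n \<le> 16"
  then have "(n-13)*(n-16) \<le> 0" by (intro mult_nonneg_nonpos) auto
  then show ?thesis by (simp add: power2_eq_square algebra_simps)
qed

lemma N_bound:
  assumes i: "i < 11"
  shows "(\<Sum>a<(4::nat). (int (card {u\<in>C. u!i = a}))^2) \<le> 937"
proof -
  define m where "m a = int (card {u\<in>C. u!i = a})" for a
  have le: "m a \<le> 16" for a unfolding m_def using class_lemma(1)[OF i, of a] by simp
  have s: "m 0 + m 1 + m 2 + m 3 = 61" using col_facts(1)[OF i] unfolding m_def sum4 .
  have ge: "m 0 \<ge> 13" "m 1 \<ge> 13" "m 2 \<ge> 13" "m 3 \<ge> 13" using s le[of 0] le[of 1] le[of 2] le[of 3] by linarith+
  have "(\<Sum>a<(4::nat). (m a)^2) = (m 0)^2 + (m 1)^2 + (m 2)^2 + (m 3)^2" by (rule sum4)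
  also have "\<dots> \<le> (29 * m 0 - 208) + (29 * m 1 - 208) + (29 * m 2 - 208) + (29 * m 3 - 208)"
    using sq_le_chord ge le by (meson add_mono)
  finally show ?thesis using s unfolding m_def by simp
qed

lemma enc4: "(b::nat) < 4 \<Longrightarrow> d < 4 \<Longrightarrow> (4*a+b = 4*c+d) = (a = c \<and> b = d)"
  by presburger

lemma pair_low:
  assumes i: "i < 11" and j: "j < 11" and ij: "i \<noteq> j"
  shows "(\<Sum>u\<in>C. \<Sum>v\<in>C. eqi i u v * eqi j u v) \<ge> 235"
proof -
  define f :: "nat list \<Rightarrow> nat" where "f w = 4 * (w!i) + w!j" for w
  have fC: "f ` C \<subseteq> {..<16}"
  proof
    fix x assume "x \<in> f ` C"
    then obtain w where w: "w \<in> C" "x = f w" by auto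
    have "w!i < 4" "w!j < 4" using ent[OF w(1) i] ent[OF w(1) j] .
    then show "x \<in> {..<16}" using w(2) by (simp add: f_def)
  qed
  have eq: "eqi i u v * eqi j u v = (if f u = f v then 1 else 0)" if "u \<in> C" "v \<in> C" for u v
    using ent[OF that(1) i] ent[OF that(1) j] ent[OF that(2) i] ent[OF that(2) j]
    using enc4[of "u!j" "v!j" "u!i" "v!i"] by (auto simp: eqi_def f_def)
  have "(\<Sum>u\<in>C. \<Sum>v\<in>C. eqi i u v * eqi j u v) = (\<Sum>u\<in>C. \<Sum>v\<in>C. if f u = f v then 1 else 0)"
    by (rule sum.cong[OF refl], rule sum.cong[OF refl]) (simp add: eq)
  also have "\<dots> \<ge> 7 * int (card C) - 12 * int (card {..<(16::nat)})"
    by (rule Q_lower1[OF finC _ fC]) simp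
  finally show ?thesis using cardC by simp
qed

lemma row_rm:
  assumes "u \<in> C"
  shows "(\<Sum>v\<in>C. if u = v then 0 else h v) = (\<Sum>v\<in>C. h v) - (h u :: int)"
proof -
  have "(\<Sum>v\<in>C. if u = v then 0 else h v) = 0 + (\<Sum>v\<in>C - {u}. if u = v then 0 else h v)"
    using sum.remove[OF finC assms, of "\<lambda>v. if u = v then 0 else h v"] by simp
  also have "(\<Sum>v\<in>C - {u}. if u = v then 0 else h v) = (\<Sum>v\<in>C - {u}. h v)" by (rule sum.cong) auto
  finally show ?thesis using sum.remove[OF finC assms, of h] by simp
qed

lemma Wi_bound:
  assumes i: "i < 11"
  shows "(\<Sum>u\<in>C. \<Sum>v\<in>C. if u = v then 0 else eqi i u v * (3 - ag u v)) \<le> 12"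
proof -
  define N where "N = (\<Sum>u\<in>C. \<Sum>v\<in>C. eqi i u v)"
  define P where "P j = (\<Sum>u\<in>C. \<Sum>v\<in>C. eqi i u v * eqi j u v)" for j
  have "(\<Sum>u\<in>C. \<Sum>v\<in>C. if u = v then 0 else eqi i u v * (3 - ag u v))
      = (\<Sum>u\<in>C. (\<Sum>v\<in>C. eqi i u v * (3 - ag u v)) + 8)"
    by (rule sum.cong[OF refl]) (simp add: row_rm eqi_def ag_self)
  also have "\<dots> = (\<Sum>u\<in>C. \<Sum>v\<in>C. 3 * eqi i u v - eqi i u v * ag u v) + 488"
    using cardC by (simp add: sum.distrib algebra_simps)
  also have "\<dots> = 3 * N - (\<Sum>u\<in>C. \<Sum>v\<in>C. eqi i u v * ag u v) + 488"
    by (simp add: N_def sum_subtractf sum_distrib_left)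
  also have "(\<Sum>u\<in>C. \<Sum>v\<in>C. eqi i u v * ag u v) = (\<Sum>j<11. P j)"
    unfolding P_def ag_def sum_distrib_left by (rule swap3)
  also have "(\<Sum>j<11. P j) = P i + (\<Sum>j\<in>{..<11} - {i}. P j)"
    using sum.remove[of "{..<11}" i P] i by simp
  also have "P i = N" unfolding P_def N_def
    by (rule sum.cong[OF refl], rule sum.cong[OF refl]) (simp add: eqi_def)
  finally have W: "(\<Sum>u\<in>C. \<Sum>v\<in>C. if u = v then 0 else eqi i u v * (3 - ag u v))
     = 2 * N - (\<Sum>j\<in>{..<11} - {i}. P j) + 488" by simp
  have "(\<Sum>j\<in>{..<11} - {i}. P j) \<ge> (\<Sum>j\<in>{..<(11::nat)} - {i}. 235)"
    by (rule sum_mono) (auto simp: P_def intro!: pair_low[OF i])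
  then have "(\<Sum>j\<in>{..<11} - {i}. P j) \<ge> 2350" using i by simp
  moreover have "N \<le> 937" unfolding N_def col_facts(2)[OF i] by (rule N_bound[OF i])
  ultimately show ?thesis using W by simp
qed

definition g :: "nat list \<Rightarrow> nat list \<Rightarrow> int" where
  "g u v = (if u = v then 0 else ag u v * (3 - ag u v))"

lemma g_sym: "g u v = g v u" unfolding g_def using ag_sym by auto

lemma g_nonneg: "u \<in> C \<Longrightarrow> v \<in> C \<Longrightarrow> g u v \<ge> 0"
  unfolding g_def using ag_le3 ag_nonneg by auto

lemma W_upper: "(\<Sum>u\<in>C. \<Sum>v\<in>C. g u v) \<le> 132"
proof -
  have "(\<Sum>u\<in>C. \<Sum>v\<in>C. g u v)
     = (\<Sum>u\<in>C. \<Sum>v\<in>C. \<Sum>i<(11::nat). if u = v then 0 else eqi i u v * (3 - ag u v))"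
    by (rule sum.cong[OF refl], rule sum.cong[OF refl])
       (simp add: g_def ag_def[of u v for u v] sum_distrib_right[symmetric])
  also have "\<dots> = (\<Sum>i<11. \<Sum>u\<in>C. \<Sum>v\<in>C. if u = v then 0 else eqi i u v * (3 - ag u v))"
    by (rule swap3)
  also have "\<dots> \<le> (\<Sum>i<(11::nat). 12)" by (rule sum_mono) (simp add: Wi_bound)
  finally show ?thesis by simp
qed

lemma contradiction: False
proof -
  have "(\<Sum>a<(4::nat). int (card {u\<in>C. u!0 = a})) = 61" using col_facts(1) by simp
  moreover have "\<And>a. card {u\<in>C. u!0 = a} \<le> 16" using class_lemma(1) by simp
  ultimately have "\<exists>a::nat. card {u\<in>C. u!0 = a} = 16"
  proof -
    assume s: "(\<Sum>a<(4::nat). int (card {u\<in>C. u!0 = a})) = 61"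
      and le: "\<And>a. card {u\<in>C. u!0 = a} \<le> 16"
    show ?thesis
    proof (rule ccontr)
      assume n: "\<not> ?thesis"
      have l15: "int (card {u\<in>C. u!0 = a}) \<le> 15" for a
      proof -
        have "card {u\<in>C. u!0 = a} \<noteq> 16" using n by blast
        then show ?thesis using le[of a] by linarith
      qed
      show False using s l15[of 0] l15[of 1] l15[of 2] l15[of 3] unfolding sum4 by linarith
    qed
  qed
  then obtain a :: nat where a16: "card {u\<in>C. u!0 = a} = 16" by blast
  define S where "S = {u\<in>C. u!0 = a}"
  have SC: "S \<subseteq> C" unfolding S_def by auto
  have finS: "finite S" using finite_subset[OF SC finC] .
  have cS: "card S = 16" using a16 S_def by simp
  have bal: "card {w\<in>S. w!j = b} = 4" if "j < 11" "j \<noteq> 0" "b < 4" for j b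
    using class_lemma(2)[of 0 a j b] that a16 unfolding S_def by simp
  have cD: "card (C - S) = 45" using card_Diff_subset[OF finS SC] cardC cS by simp
  have rowS: "(\<Sum>w\<in>S. g u w) \<ge> 2" if u: "u \<in> C - S" for u
  proof -
    have uC: "u \<in> C" and u0: "u!0 \<noteq> a" using u S_def by auto
    define F where "F j = (\<Sum>w\<in>S. eqi j u w)" for j
    have "(\<Sum>w\<in>S. ag u w) = (\<Sum>j<11. F j)"
      unfolding ag_def F_def by (rule sum.swap)
    also have "\<dots> = F 0 + (\<Sum>j\<in>{..<(11::nat)} - {0}. F j)"
      using sum.remove[of "{..<11}" 0 F] by simp
    also have "F 0 = 0" unfolding F_def using u0 by (intro sum.neutral) (auto simp: S_def eqi_def)
    also have "(\<Sum>j\<in>{..<(11::nat)} - {0}. F j) = (\<Sum>j\<in>{..<(11::nat)} - {0}. 4)"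
    proof (rule sum.cong[OF refl])
      fix j :: nat assume j: "j \<in> {..<11} - {0}"
      have "F j = int (card {w\<in>S. u!j = w!j})" unfolding F_def eqi_def by (rule sum_boole_int[OF finS])
      also have "{w\<in>S. u!j = w!j} = {w\<in>S. w!j = u!j}" by auto
      finally show "F j = 4" using bal[of j "u!j"] j ent[OF uC, of j] by simp
    qed
    finally have s40: "(\<Sum>w\<in>S. ag u w) = 40" by simp
    have s8: "(\<Sum>w\<in>S. 3 - ag u w) = 8" using s40 cS by (simp add: sum_subtractf)
    have "\<exists>w\<in>S. ag u w \<noteq> 0 \<and> ag u w \<noteq> 3"
    proof (rule ccontr)
      assume "\<not> ?thesis"
      then have "\<forall>w\<in>S. (3::int) dvd (3 - ag u w)" by auto
      then have "(3::int) dvd (\<Sum>w\<in>S. 3 - ag u w)" by (intro dvd_sum) auto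
      then show False using s8 by simp
    qed
    then obtain w where w: "w \<in> S" "ag u w \<noteq> 0" "ag u w \<noteq> 3" by blast
    have wC: "w \<in> C" and uw: "u \<noteq> w" using w(1) SC u by auto
    have "0 \<le> ag u w" "ag u w \<le> 3" using ag_nonneg ag_le3[OF uC wC uw] by auto
    then have "ag u w = 1 \<or> ag u w = 2" using w by auto
    then have gw: "g u w = 2" using uw unfolding g_def by auto
    have "g u w \<le> (\<Sum>w\<in>S. g u w)"
      by (rule member_le_sum[OF w(1) _ finS]) (use SC uC g_nonneg in auto)
    then show ?thesis using gw by simp
  qed
  have finD: "finite (C - S)" using finC by simp
  have A: "(\<Sum>u\<in>C - S. \<Sum>w\<in>S. g u w) \<ge> 90"
  proof -
    have "(\<Sum>u\<in>C - S. \<Sum>w\<in>S. g u w) \<ge> (\<Sum>u\<in>C - S. 2)" by (rule sum_mono) (rule rowS)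
    then show ?thesis using cD by simp
  qed
  have B1: "(\<Sum>u\<in>C - S. \<Sum>v\<in>C. g u v) \<ge> (\<Sum>u\<in>C - S. \<Sum>w\<in>S. g u w)"
    by (rule sum_mono, rule sum_mono2[OF finC SC]) (use g_nonneg in auto)
  have "(\<Sum>u\<in>S. \<Sum>v\<in>C - S. g u v) = (\<Sum>v\<in>C - S. \<Sum>u\<in>S. g u v)" by (rule sum.swap)
  also have "\<dots> = (\<Sum>v\<in>C - S. \<Sum>u\<in>S. g v u)" by (simp add: g_sym)
  finally have swp: "(\<Sum>u\<in>S. \<Sum>v\<in>C - S. g u v) = (\<Sum>v\<in>C - S. \<Sum>u\<in>S. g v u)" .
  have B2: "(\<Sum>u\<in>S. \<Sum>v\<in>C. g u v) \<ge> (\<Sum>u\<in>S. \<Sum>v\<in>C - S. g u v)"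
    by (rule sum_mono, rule sum_mono2[OF finC]) (use g_nonneg SC in auto)
  have split: "(\<Sum>u\<in>C. \<Sum>v\<in>C. g u v) = (\<Sum>u\<in>C - S. \<Sum>v\<in>C. g u v) + (\<Sum>u\<in>S. \<Sum>v\<in>C. g u v)"
    using sum.subset_diff[OF SC finC] by simp
  have "(\<Sum>u\<in>C. \<Sum>v\<in>C. g u v) \<ge> 180" using split B1 B2 swp A by linarith
  then show False using W_upper by simp
qed

end


theorem proposition5p5:
  shows "A_code 4 11 8 \<le> 60"
proof -
  have bound: "card C \<le> 60" if c: "is_code 4 11 8 C" for C
  proof (rule ccontr)
    assume "\<not> card C \<le> 60"
    then have "61 \<le> card C" by simp
    then obtain T where T: "T \<subseteq> C" "card T = 61" by (rule obtain_subset_with_card_n)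
    have "code61 T" using c T by unfold_locales (auto simp: is_code_def)
    then show False by (rule code61.contradiction)
  qed
  have sub: "{card C | C. is_code 4 11 8 C} \<subseteq> {..60}" using bound by auto
  have ne: "{card C | C. is_code 4 11 8 C} \<noteq> {}"
  proof -
    have "is_code 4 11 8 {}" by (simp add: is_code_def)
    then have "card ({}::nat list set) \<in> {card C | C. is_code 4 11 8 C}" by blast
    then show ?thesis by blast
  qed
  show ?thesis unfolding A_code_def
    by (rule Max.boundedI[OF finite_subset[OF sub] ne]) (use bound in auto)
qed

end
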